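(* Let $l:G\to\Lambda$ be a complete $\delta$-hyperbolic length function on a group $G$ ($\delta\in\Lambda$, $\delta\geqslant0$). Let $A=\ker(l)=\{g: l(g)=0\}$, $X_l=G/A$ (left cosets) and $d_l(gA,hA)=l(g^{-1}h)$. Then the $\delta$-hyperbolic $\Lambda$-metric space $(X_l,d_l)$ is quasi-geodesic.
   Context: $\Lambda$ is an ordered abelian group with ordered divisible hull $\Lambda_{\mathbb{Q}}\supseteq\Lambda$. A length function on $G$ is $l:G\to\Lambda$ with $l(g)\geqslant0$, $l(1)=0$, $l(g)=l(g^{-1})$, $l(gh)\leqslant l(g)+l(h)$; $d_l$ is then a well-defined $\Lambda$-metric. Let $c(g,h)=\tfrac12(l(g)+l(h)-l(g^{-1}h))\in\Lambda_{\mathbb{Q}}$; $l$ is $\delta$-hyperbolic if $c(f,g)\geqslant\min\{c(f,h),c(g,h)\}-\delta$ for all $f,g,h$. Write $g=u\circ g_1$ if $g=ug_1$ and $l(g)=l(u)+l(g_1)$. $l$ is complete if for every $g\in G$ and every $\alpha\in\Lambda$ with $0\leqslant\alpha\leqslant l(g)$ there exist $u,g_1$ with $g=u\circ g_1$ and $l(u)=\alpha$. A $\Lambda$-metric space $(X,d)$ is quasi-geodesic if there is a constant $C\in\Lambda$, $C\geqslant0$, such that for all $x,y\in X$ there is a map $\gamma:\{t\in\Lambda:0\leqslant t\leqslant d(x,y)\}\to X$ with $\gamma(0)=x$, $\gamma(d(x,y))=y$ and $\beta-\alpha\leqslant d(\gamma(\alpha),\gamma(\beta))\leqslant\beta-\alpha+C$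 whenever $0\leqslant\alpha\leqslant\beta\leqslant d(x,y)$. *)

theory Defs
  imports "HOL-Algebra.Coset"
begin

definition length_function :: "('g, 'b) monoid_scheme \<Rightarrow> ('g \<Rightarrow> 'a::linordered_ab_group_add) \<Rightarrow> bool" where
  "length_function G l \<longleftrightarrow>
     (\<forall>g\<in>carrier G. 0 \<le> l g) \<and> l \<one>\<^bsub>G\<^esub> = 0 \<and>
     (\<forall>g\<in>carrier G. l (inv\<^bsub>G\<^esub> g) = l g) \<and>
     (\<forall>g\<in>carrier G. \<forall>h\<in>carrier G. l (g \<otimes>\<^bsub>G\<^esub> h) \<le> l g + l h)"

text \<open>Twice the Gromov product: 2 c(g,h) = l(g) + l(h) - l(g^{-1} h), which lies
in 'a (avoiding the divisible hull).\<close>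

definition gromov2 :: "('g, 'b) monoid_scheme \<Rightarrow> ('g \<Rightarrow> 'a::linordered_ab_group_add) \<Rightarrow> 'g \<Rightarrow> 'g \<Rightarrow> 'a" where
  "gromov2 G l g h = l g + l h - l (inv\<^bsub>G\<^esub> g \<otimes>\<^bsub>G\<^esub> h)"

text \<open>c(f,g) >= min(c(f,h), c(g,h)) - delta, multiplied by 2.\<close>

definition hyperbolic_length :: "('g, 'b) monoid_scheme \<Rightarrow> ('g \<Rightarrow> 'a::linordered_ab_group_add) \<Rightarrow> 'a \<Rightarrow> bool" where
  "hyperbolic_length G l \<delta> \<longleftrightarrow>
     (\<forall>f\<in>carrier G. \<forall>g\<in>carrier G. \<forall>h\<in>carrier G.
        gromov2 G l f g \<ge> min (gromov2 G l f h) (gromov2 G l g h) - (\<delta> + \<delta>))"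

definition complete_length :: "('g, 'b) monoid_scheme \<Rightarrow> ('g \<Rightarrow> 'a::linordered_ab_group_add) \<Rightarrow> bool" where
  "complete_length G l \<longleftrightarrow>
     (\<forall>g\<in>carrier G. \<forall>\<alpha>. 0 \<le> \<alpha> \<and> \<alpha> \<le> l g \<longrightarrow>
        (\<exists>u\<in>carrier G. \<exists>g1\<in>carrier G. g = u \<otimes>\<^bsub>G\<^esub> g1 \<and> l g = l u + l g1 \<and> l u = \<alpha>))"

definition length_kernel :: "('g, 'b) monoid_scheme \<Rightarrow> ('g \<Rightarrow> 'a::linordered_ab_group_add) \<Rightarrow> 'g set" where
  "length_kernel G l = {g \<in> carrier G. l g = 0}"

definition length_space :: "('g, 'b) monoid_scheme \<Rightarrow> ('g \<Rightarrow> 'a::linordered_ab_group_add) \<Rightarrow> 'g set set" where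
  "length_space G l = {g <#\<^bsub>G\<^esub> length_kernel G l | g. g \<in> carrier G}"

text \<open>d_l(gA, hA) = l(g^{-1} h), computed from arbitrary representatives
(well defined when A = ker l).\<close>

definition length_dist :: "('g, 'b) monoid_scheme \<Rightarrow> ('g \<Rightarrow> 'a::linordered_ab_group_add) \<Rightarrow> 'g set \<Rightarrow> 'g set \<Rightarrow> 'a" where
  "length_dist G l x y = l (inv\<^bsub>G\<^esub> (SOME g. g \<in> x) \<otimes>\<^bsub>G\<^esub> (SOME h. h \<in> y))"

definition quasi_geodesic :: "'x set \<Rightarrow> ('x \<Rightarrow> 'x \<Rightarrow> 'a::linordered_ab_group_add) \<Rightarrow> bool" where
  "quasi_geodesic X d \<longleftrightarrow>
     (\<exists>C. 0 \<le> C \<and>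
       (\<forall>x\<in>X. \<forall>y\<in>X. \<exists>\<gamma>.
          (\<forall>t. 0 \<le> t \<and> t \<le> d x y \<longrightarrow> \<gamma> t \<in> X) \<and>
          \<gamma> 0 = x \<and> \<gamma> (d x y) = y \<and>
          (\<forall>\<alpha> \<beta>. 0 \<le> \<alpha> \<and> \<alpha> \<le> \<beta> \<and> \<beta> \<le> d x y \<longrightarrow>
             \<beta> - \<alpha> \<le> d (\<gamma> \<alpha>) (\<gamma> \<beta>) \<and> d (\<gamma> \<alpha>) (\<gamma> \<beta>) \<le> \<beta> - \<alpha> + C)))"

end

theory Submission
  imports Defs
begin

lemma kernel_subgroup:
  assumes G: "group G" and L: "length_function G l"
  shows "subgroup (length_kernel G l) G"
proof -
  interpret group G by fact
  have nn: "\<And>g. g \<in> carrier G \<Longrightarrow> 0 \<le> l g" and l1: "l \<one>\<^bsub>G\<^esub> = 0"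
    and li: "\<And>g. g \<in> carrier G \<Longrightarrow> l (inv\<^bsub>G\<^esub> g) = l g"
    and lm: "\<And>g h. g \<in> carrier G \<Longrightarrow> h \<in> carrier G \<Longrightarrow> l (g \<otimes>\<^bsub>G\<^esub> h) \<le> l g + l h"
    using L unfolding length_function_def by auto
  show ?thesis
  proof
    show "length_kernel G l \<subseteq> carrier G" unfolding length_kernel_def by auto
    show "\<one>\<^bsub>G\<^esub> \<in> length_kernel G l" unfolding length_kernel_def using l1 by auto
    fix x y assume x: "x \<in> length_kernel G l" and y: "y \<in> length_kernel G l"
    then have xc: "x \<in> carrier G" "l x = 0" and yc: "y \<in> carrier G" "l y = 0"
      unfolding length_kernel_def by auto
    show "x \<otimes>\<^bsub>G\<^esub> y \<in> length_kernel G l"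
      using lm[OF xc(1) yc(1)] nn[of "x \<otimes>\<^bsub>G\<^esub> y"] xc yc unfolding length_kernel_def by auto
    show "inv\<^bsub>G\<^esub> x \<in> length_kernel G l" using li xc unfolding length_kernel_def by auto
  qed
qed

lemma cancel_l:
  assumes G: "group G" and k: "k \<in> carrier G" and z: "z \<in> carrier G"
  shows "k \<otimes>\<^bsub>G\<^esub> (inv\<^bsub>G\<^esub> k \<otimes>\<^bsub>G\<^esub> z) = z"
proof -
  interpret group G by fact
  show ?thesis using k z by (simp add: m_assoc[symmetric])
qed

lemma dist_coset:
  assumes G: "group G" and L: "length_function G l"
    and a: "a \<in> carrier G" and b: "b \<in> carrier G"
  shows "length_dist G l (a <#\<^bsub>G\<^esub> length_kernel G l) (b <#\<^bsub>G\<^esub> length_kernel G l)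
         = l (inv\<^bsub>G\<^esub> a \<otimes>\<^bsub>G\<^esub> b)"
proof -
  interpret group G by fact
  define A where "A = length_kernel G l"
  have sub: "subgroup A G" using kernel_subgroup[OF G L] A_def by simp
  have nn: "\<And>g. g \<in> carrier G \<Longrightarrow> 0 \<le> l g" and l1: "l \<one>\<^bsub>G\<^esub> = 0"
    and li: "\<And>g. g \<in> carrier G \<Longrightarrow> l (inv\<^bsub>G\<^esub> g) = l g"
    and lm: "\<And>g h. g \<in> carrier G \<Longrightarrow> h \<in> carrier G \<Longrightarrow> l (g \<otimes>\<^bsub>G\<^esub> h) \<le> l g + l h"
    using L unfolding length_function_def by auto
  have ex: "\<And>c. c \<in> carrier G \<Longrightarrow> \<exists>x. x \<in> c <#\<^bsub>G\<^esub> A"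
    unfolding l_coset_def using subgroup.one_closed[OF sub] r_one by force
  define x where "x = (SOME x. x \<in> a <#\<^bsub>G\<^esub> A)"
  define y where "y = (SOME x. x \<in> b <#\<^bsub>G\<^esub> A)"
  have "x \<in> a <#\<^bsub>G\<^esub> A" using someI_ex[OF ex[OF a]] x_def by simp
  then obtain k where k: "k \<in> A" "x = a \<otimes>\<^bsub>G\<^esub> k" unfolding l_coset_def by auto
  have "y \<in> b <#\<^bsub>G\<^esub> A" using someI_ex[OF ex[OF b]] y_def by simp
  then obtain k' where k': "k' \<in> A" "y = b \<otimes>\<^bsub>G\<^esub> k'" unfolding l_coset_def by auto
  have kc: "k \<in> carrier G" "l k = 0" "k' \<in> carrier G" "l k' = 0"
    using k k' unfolding A_def length_kernel_def by auto
  have e1: "inv\<^bsub>G\<^esub> x \<otimes>\<^bsub>G\<^esub> y = inv\<^bsub>G\<^esub> k \<otimes>\<^bsub>G\<^esub> (inv\<^bsub>G\<^esub> a \<otimes>\<^bsub>G\<^esub> b) \<otimes>\<^bsub>G\<^esub> k'"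
    using k k' kc a b by (simp add: inv_mult_group m_assoc)
  have e2: "inv\<^bsub>G\<^esub> a \<otimes>\<^bsub>G\<^esub> b = k \<otimes>\<^bsub>G\<^esub> (inv\<^bsub>G\<^esub> x \<otimes>\<^bsub>G\<^esub> y) \<otimes>\<^bsub>G\<^esub> inv\<^bsub>G\<^esub> k'"
    using e1 kc a b by (simp add: m_assoc cancel_l[OF G])
  have c1: "inv\<^bsub>G\<^esub> x \<otimes>\<^bsub>G\<^esub> y \<in> carrier G" using k k' kc a b by simp
  have "l (inv\<^bsub>G\<^esub> x \<otimes>\<^bsub>G\<^esub> y) \<le> l (inv\<^bsub>G\<^esub> a \<otimes>\<^bsub>G\<^esub> b)"
  proof -
    have "l (inv\<^bsub>G\<^esub> x \<otimes>\<^bsub>G\<^esub> y) \<le> l (inv\<^bsub>G\<^esub> k \<otimes>\<^bsub>G\<^esub> (inv\<^bsub>G\<^esub> a \<otimes>\<^bsub>G\<^esub> b)) + l k'"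
      unfolding e1 using lm[of "inv\<^bsub>G\<^esub> k \<otimes>\<^bsub>G\<^esub> (inv\<^bsub>G\<^esub> a \<otimes>\<^bsub>G\<^esub> b)" k'] kc a b by simp
    also have "\<dots> \<le> l (inv\<^bsub>G\<^esub> k) + l (inv\<^bsub>G\<^esub> a \<otimes>\<^bsub>G\<^esub> b) + l k'"
      using lm kc a b by (meson add_right_mono inv_closed m_closed)
    finally show ?thesis using li kc by simp
  qed
  moreover have "l (inv\<^bsub>G\<^esub> a \<otimes>\<^bsub>G\<^esub> b) \<le> l (inv\<^bsub>G\<^esub> x \<otimes>\<^bsub>G\<^esub> y)"
  proof -
    have "l (inv\<^bsub>G\<^esub> a \<otimes>\<^bsub>G\<^esub> b) \<le> l (k \<otimes>\<^bsub>G\<^esub> (inv\<^bsub>G\<^esub> x \<otimes>\<^bsub>G\<^esub> y)) + l (inv\<^bsub>G\<^esub> k')"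
      unfolding e2 using lm[of "k \<otimes>\<^bsub>G\<^esub> (inv\<^bsub>G\<^esub> x \<otimes>\<^bsub>G\<^esub> y)" "inv\<^bsub>G\<^esub> k'"] kc c1 by simp
    also have "\<dots> \<le> l k + l (inv\<^bsub>G\<^esub> x \<otimes>\<^bsub>G\<^esub> y) + l (inv\<^bsub>G\<^esub> k')"
      using lm kc c1 by (meson add_right_mono)
    finally show ?thesis using li kc by simp
  qed
  ultimately show ?thesis unfolding length_dist_def x_def y_def A_def by simp
qed

lemma coset_absorb:
  assumes G: "group G" and L: "length_function G l"
    and a: "a \<in> carrier G" and k: "k \<in> length_kernel G l"
  shows "(a \<otimes>\<^bsub>G\<^esub> k) <#\<^bsub>G\<^esub> length_kernel G l = a <#\<^bsub>G\<^esub> length_kernel G l"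
proof -
  interpret group G by fact
  have sub: "subgroup (length_kernel G l) G" using kernel_subgroup[OF G L] by simp
  have kc: "k \<in> carrier G" using k unfolding length_kernel_def by auto
  have "(a \<otimes>\<^bsub>G\<^esub> k) <#\<^bsub>G\<^esub> length_kernel G l = a <#\<^bsub>G\<^esub> (k <#\<^bsub>G\<^esub> length_kernel G l)"
    using lcos_m_assoc[OF subgroup.subset[OF sub] a kc] by simp
  also have "k <#\<^bsub>G\<^esub> length_kernel G l = length_kernel G l" using coset_join3[OF kc sub k] .
  finally show ?thesis .
qed

theorem mainTheorem15:
  fixes G :: "('g, 'b) monoid_scheme"
    and l :: "'g \<Rightarrow> 'a::linordered_ab_group_add"
    and \<delta> :: 'a
  assumes "group G"
    and "length_function G l"
    and "complete_length G l"
    and "0 \<le> \<delta>"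
    and "hyperbolic_length G l \<delta>"
  shows "quasi_geodesic (length_space G l) (length_dist G l)"
proof -
  interpret group G by fact
  note G = assms(1) and L = assms(2)
  define A where "A = length_kernel G l"
  have nn: "\<And>g. g \<in> carrier G \<Longrightarrow> 0 \<le> l g" and l1: "l \<one>\<^bsub>G\<^esub> = 0"
    and li: "\<And>g. g \<in> carrier G \<Longrightarrow> l (inv\<^bsub>G\<^esub> g) = l g"
    and lm: "\<And>g h. g \<in> carrier G \<Longrightarrow> h \<in> carrier G \<Longrightarrow> l (g \<otimes>\<^bsub>G\<^esub> h) \<le> l g + l h"
    using L unfolding length_function_def by auto
  have hyp: "\<And>f g h. f \<in> carrier G \<Longrightarrow> g \<in> carrier G \<Longrightarrow> h \<in> carrier G \<Longrightarrow>
     gromov2 G l f g \<ge> min (gromov2 G l f h) (gromov2 G l g h) - (\<delta> + \<delta>)"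
    using assms(5) unfolding hyperbolic_length_def by blast
  have compl: "\<And>g \<alpha>. g \<in> carrier G \<Longrightarrow> 0 \<le> \<alpha> \<Longrightarrow> \<alpha> \<le> l g \<Longrightarrow>
        \<exists>u\<in>carrier G. \<exists>g1\<in>carrier G. g = u \<otimes>\<^bsub>G\<^esub> g1 \<and> l g = l u + l g1 \<and> l u = \<alpha>"
    using assms(3) unfolding complete_length_def by blast
  show ?thesis unfolding quasi_geodesic_def
  proof (intro exI[of _ "\<delta> + \<delta>"] conjI ballI)
    show "0 \<le> \<delta> + \<delta>" using assms(4) by simp
    fix x y assume x: "x \<in> length_space G l" and y: "y \<in> length_space G l"
    obtain g where g: "g \<in> carrier G" "x = g <#\<^bsub>G\<^esub> A" using x unfolding length_space_def A_def by auto
    obtain h where h: "h \<in> carrier G" "y = h <#\<^bsub>G\<^esub> A" using y unfolding length_space_def A_def by auto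
    define f where "f = inv\<^bsub>G\<^esub> g \<otimes>\<^bsub>G\<^esub> h"
    have fc: "f \<in> carrier G" using g h f_def by simp
    have dxy: "length_dist G l x y = l f"
      using dist_coset[OF G L g(1) h(1)] g h f_def A_def by simp
    define P where "P = (\<lambda>t u. u \<in> carrier G \<and> (\<exists>g1\<in>carrier G. f = u \<otimes>\<^bsub>G\<^esub> g1 \<and> l f = l u + l g1 \<and> l u = t))"
    define U where "U = (\<lambda>t. SOME u. P t u)"
    have PU: "P t (U t)" if "0 \<le> t" "t \<le> l f" for t
    proof -
      have "\<exists>u. P t u" using compl[OF fc that] unfolding P_def by blast
      then show ?thesis unfolding U_def by (rule someI_ex)
    qed
    have Uc: "U t \<in> carrier G" and lU: "l (U t) = t"
      and rest: "l (inv\<^bsub>G\<^esub> (U t) \<otimes>\<^bsub>G\<^esub> f) = l f - t" if t0: "0 \<le> t" "t \<le> l f" for t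
    proof -
      obtain g1 where g1: "g1 \<in> carrier G" "f = U t \<otimes>\<^bsub>G\<^esub> g1" "l f = l (U t) + l g1" "l (U t) = t"
        using PU[OF t0] unfolding P_def by blast
      show "U t \<in> carrier G" using PU[OF t0] unfolding P_def by blast
      then have "inv\<^bsub>G\<^esub> (U t) \<otimes>\<^bsub>G\<^esub> f = g1" using g1 by (simp add: m_assoc[symmetric])
      then show "l (inv\<^bsub>G\<^esub> (U t) \<otimes>\<^bsub>G\<^esub> f) = l f - t" using g1 by (simp add: algebra_simps)
      show "l (U t) = t" by fact
    qed
    define \<gamma> where "\<gamma> = (\<lambda>t. (g \<otimes>\<^bsub>G\<^esub> U t) <#\<^bsub>G\<^esub> A)"
    have dg: "length_dist G l (\<gamma> \<alpha>) (\<gamma> \<beta>) = l (inv\<^bsub>G\<^esub> (U \<alpha>) \<otimes>\<^bsub>G\<^esub> U \<beta>)"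
      if "0 \<le> \<alpha>" "\<alpha> \<le> l f" "0 \<le> \<beta>" "\<beta> \<le> l f" for \<alpha> \<beta>
    proof -
      have "length_dist G l (\<gamma> \<alpha>) (\<gamma> \<beta>) = l (inv\<^bsub>G\<^esub> (g \<otimes>\<^bsub>G\<^esub> U \<alpha>) \<otimes>\<^bsub>G\<^esub> (g \<otimes>\<^bsub>G\<^esub> U \<beta>))"
        unfolding \<gamma>_def A_def using dist_coset[OF G L] Uc that g by simp
      also have "inv\<^bsub>G\<^esub> (g \<otimes>\<^bsub>G\<^esub> U \<alpha>) \<otimes>\<^bsub>G\<^esub> (g \<otimes>\<^bsub>G\<^esub> U \<beta>) = inv\<^bsub>G\<^esub> (U \<alpha>) \<otimes>\<^bsub>G\<^esub> U \<beta>"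
        using Uc that g by (simp add: inv_mult_group m_assoc[symmetric]) (simp add: m_assoc)
      finally show ?thesis .
    qed
    show "\<exists>\<gamma>. (\<forall>t. 0 \<le> t \<and> t \<le> length_dist G l x y \<longrightarrow> \<gamma> t \<in> length_space G l) \<and>
          \<gamma> 0 = x \<and> \<gamma> (length_dist G l x y) = y \<and>
          (\<forall>\<alpha> \<beta>. 0 \<le> \<alpha> \<and> \<alpha> \<le> \<beta> \<and> \<beta> \<le> length_dist G l x y \<longrightarrow>
             \<beta> - \<alpha> \<le> length_dist G l (\<gamma> \<alpha>) (\<gamma> \<beta>) \<and>
             length_dist G l (\<gamma> \<alpha>) (\<gamma> \<beta>) \<le> \<beta> - \<alpha> + (\<delta> + \<delta>))"
    proof (intro exI[of _ \<gamma>] conjI allI impI)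
      have f0: "0 \<le> l f" using nn fc by simp
      fix t assume "0 \<le> t \<and> t \<le> length_dist G l x y"
      then show "\<gamma> t \<in> length_space G l"
        unfolding \<gamma>_def length_space_def A_def using Uc g dxy by auto
    next
      have f0: "0 \<le> l f" using nn fc by simp
      have "U 0 \<in> A" using Uc[of 0] lU[of 0] f0 unfolding A_def length_kernel_def by auto
      then show "\<gamma> 0 = x" unfolding \<gamma>_def using coset_absorb[OF G L g(1)] g A_def by simp
    next
      have f0: "0 \<le> l f" using nn fc by simp
      obtain g1 where g1: "g1 \<in> carrier G" "f = U (l f) \<otimes>\<^bsub>G\<^esub> g1" "l f = l (U (l f)) + l g1"
        using PU[of "l f"] f0 unfolding P_def by auto
      have "l g1 = 0" using g1(3) lU[of "l f"] f0 by simp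
      then have "g1 \<in> A" "inv\<^bsub>G\<^esub> g1 \<in> A" using g1(1) li unfolding A_def length_kernel_def by auto
      have uc: "U (l f) \<in> carrier G" using Uc[of "l f"] f0 by simp
      have "g \<otimes>\<^bsub>G\<^esub> U (l f) = h \<otimes>\<^bsub>G\<^esub> inv\<^bsub>G\<^esub> g1"
      proof -
        have "g \<otimes>\<^bsub>G\<^esub> f = h" unfolding f_def using g h by (simp add: m_assoc[symmetric])
        then have "h = g \<otimes>\<^bsub>G\<^esub> U (l f) \<otimes>\<^bsub>G\<^esub> g1" using g1 g uc by (simp add: m_assoc)
        then have "h \<otimes>\<^bsub>G\<^esub> inv\<^bsub>G\<^esub> g1 = g \<otimes>\<^bsub>G\<^esub> U (l f) \<otimes>\<^bsub>G\<^esub> g1 \<otimes>\<^bsub>G\<^esub> inv\<^bsub>G\<^esub> g1" by simp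
        then show ?thesis using g uc g1(1) by (simp add: m_assoc)
      qed
      then show "\<gamma> (length_dist G l x y) = y" unfolding \<gamma>_def dxy
        using coset_absorb[OF G L h(1)] \<open>inv\<^bsub>G\<^esub> g1 \<in> A\<close> h A_def by simp
    next
      fix \<alpha> \<beta> assume ab: "0 \<le> \<alpha> \<and> \<alpha> \<le> \<beta> \<and> \<beta> \<le> length_dist G l x y"
      then have r: "0 \<le> \<alpha>" "\<alpha> \<le> l f" "0 \<le> \<beta>" "\<beta> \<le> l f" "\<alpha> \<le> \<beta>" using dxy by auto
      have ua: "U \<alpha> \<in> carrier G" "l (U \<alpha>) = \<alpha>" "l (inv\<^bsub>G\<^esub> (U \<alpha>) \<otimes>\<^bsub>G\<^esub> f) = l f - \<alpha>"
        using Uc lU rest r by auto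
      have ub: "U \<beta> \<in> carrier G" "l (U \<beta>) = \<beta>" "l (inv\<^bsub>G\<^esub> (U \<beta>) \<otimes>\<^bsub>G\<^esub> f) = l f - \<beta>"
        using Uc lU rest r by auto
      have D: "length_dist G l (\<gamma> \<alpha>) (\<gamma> \<beta>) = l (inv\<^bsub>G\<^esub> (U \<alpha>) \<otimes>\<^bsub>G\<^esub> U \<beta>)" using dg r by simp
      have "l (U \<beta>) \<le> l (U \<alpha>) + l (inv\<^bsub>G\<^esub> (U \<alpha>) \<otimes>\<^bsub>G\<^esub> U \<beta>)"
      proof -
        have "U \<beta> = U \<alpha> \<otimes>\<^bsub>G\<^esub> (inv\<^bsub>G\<^esub> (U \<alpha>) \<otimes>\<^bsub>G\<^esub> U \<beta>)" using ua ub by (simp add: m_assoc[symmetric])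
        then show ?thesis using lm[of "U \<alpha>" "inv\<^bsub>G\<^esub> (U \<alpha>) \<otimes>\<^bsub>G\<^esub> U \<beta>"] ua ub by simp
      qed
      then show "\<beta> - \<alpha> \<le> length_dist G l (\<gamma> \<alpha>) (\<gamma> \<beta>)" using D ua ub by (simp add: algebra_simps)
      have H: "gromov2 G l (U \<alpha>) (U \<beta>) \<ge> min (gromov2 G l (U \<alpha>) f) (gromov2 G l (U \<beta>) f) - (\<delta> + \<delta>)"
        using hyp ua ub fc by blast
      have "gromov2 G l (U \<alpha>) f = \<alpha> + \<alpha>" "gromov2 G l (U \<beta>) f = \<beta> + \<beta>"
        unfolding gromov2_def using ua ub by simp_all
      moreover have "min (\<alpha> + \<alpha>) (\<beta> + \<beta>) = \<alpha> + \<alpha>" using r by (simp add: add_mono min_def)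
      ultimately have "\<alpha> + \<beta> - l (inv\<^bsub>G\<^esub> (U \<alpha>) \<otimes>\<^bsub>G\<^esub> U \<beta>) \<ge> \<alpha> + \<alpha> - (\<delta> + \<delta>)"
        using H unfolding gromov2_def using ua ub by simp
      then show "length_dist G l (\<gamma> \<alpha>) (\<gamma> \<beta>) \<le> \<beta> - \<alpha> + (\<delta> + \<delta>)"
        using D by (simp add: algebra_simps)
    qed
  qed
qed

end
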